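(* For every $n\ge1$ and $\pi\in\mathfrak S_n$, \[\sum_{T_\sigma\in\mathrm{Orb}(T_\pi)} x^{\mathrm{as}(\sigma)}=x^{\mathrm{leaf}(T_\pi)}(1+x)^{\,n-\mathrm{leaf}(T_\pi)}.\]
   Context: All trees are rooted binary trees in which each child of a node is designated as a left or a right child. For a finite totally ordered set $Y$, a min–max tree on $Y$ is such a tree whose nodes are labeled bijectively by $Y$ so that the label of each node is either the minimum or the maximum of the labels in its subtree. A node with at least one child is inner; an inner node is a min-node (resp. max-node) if its label is the minimum (resp. maximum) of the labels of its subtree. An HR-tree is a min–max tree in which every inner node $s$ has a nonempty right subtree containing the maximum label of the subtree of $s$ if $s$ is a min-node, and the minimum label of that subtree if $s$ is a max-node. The reading word $w(T)$ is the in-order reading $w(T)=w(L)\,\ell\,w(R)$ ($\ell$ the root label, $L,R$ the left and right subtrees). The map $T\mapsto w(T)$ is a bijection from HR-trees labeled by $[n]$ onto $\mathfrak S_n$; $T_\pi$ denotes the HR-tree with $w(T_\pi)=\pi$. $\mathrm{leaf}(T)$ is the number of leaves of $T$. HR-action: for $i\in[n]$ and an HR-tree $T_\pi$, let $v$ be the node labeled $\pi_i$. If $v$ is a leaf, $\psi_i(T_\pi)=T_\pi$. Otherwise let $R$ be the set consisting of $\pi_i$ and the labels of the right subtree of $v$; relabel the nodes of $v$ and its right subtree, keeping the shape, so that $v$ receives $\max R$ if $v$ is a min-node and $\min R$ if $v$ is a max-node, and the nodes of the right subtree receive the remaining elements of $R$ by the order-preserving bijection from their old labels; all other labels are unchanged.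 The $\psi_i$ are pairwise commuting involutions, and $\mathrm{Orb}(T)$ denotes the set of all trees obtained from $T$ by compositions of the $\psi_i$. $\mathrm{as}(\pi)$ is the maximal length $k$ of a subsequence $\pi_{i_1}\cdots\pi_{i_k}$ ($i_1<\dots<i_k$) of $\pi$ with $\pi_{i_1}>\pi_{i_2}<\pi_{i_3}>\cdots$ (length $1$ allowed). *)

theory Defs
  imports "HOL-Library.Tree" "HOL-Library.Sublist" "HOL-Computational_Algebra.Polynomial"
begin

(* Binary trees: HOL-Library 'a tree; Leaf = empty tree, Node l a r = node labelled a
   with left subtree l and right subtree r. A "leaf" of the paper is Node Leaf a Leaf. *)

fun leaf_count :: "nat tree \<Rightarrow> nat" where
  "leaf_count Leaf = 0"
| "leaf_count (Node l a r) =
     (if l = Leaf \<and> r = Leaf then 1 else leaf_count l + leaf_count r)"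

fun hr_cond :: "nat tree \<Rightarrow> bool" where
  "hr_cond Leaf = True"
| "hr_cond (Node l a r) =
     (hr_cond l \<and> hr_cond r \<and>
      (let S = set_tree (Node l a r) in
        (a = Min S \<or> a = Max S) \<and>
        ((l \<noteq> Leaf \<or> r \<noteq> Leaf) \<longrightarrow>
           r \<noteq> Leaf \<and>
           (if a = Min S then Max S \<in> set_tree r else Min S \<in> set_tree r))))"

definition hr_tree :: "nat \<Rightarrow> nat tree \<Rightarrow> bool" where
  "hr_tree n T \<longleftrightarrow> set_tree T = {1..n} \<and> distinct (inorder T) \<and> hr_cond T"

definition is_perm_word :: "nat \<Rightarrow> nat list \<Rightarrow> bool" where
  "is_perm_word n \<pi> \<longleftrightarrow> distinct \<pi> \<and> set \<pi> = {1..n}"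

definition T_of :: "nat \<Rightarrow> nat list \<Rightarrow> nat tree" where
  "T_of n \<pi> = (THE T. hr_tree n T \<and> inorder T = \<pi>)"

definition ord_bij :: "nat set \<Rightarrow> nat set \<Rightarrow> nat \<Rightarrow> nat" where
  "ord_bij A B x = sorted_list_of_set B ! card {y \<in> A. y < x}"

fun psi_at :: "nat \<Rightarrow> nat tree \<Rightarrow> nat tree" where
  "psi_at a Leaf = Leaf"
| "psi_at a (Node l b r) =
     (if b = a then
        (if l = Leaf \<and> r = Leaf then Node l b r
         else
           (let S = set_tree (Node l b r);
                R = insert b (set_tree r);
                new = (if b = Min S then Max R else Min R)
            in Node l new (map_tree (ord_bij (set_tree r) (R - {new})) r)))
      else Node (psi_at a l) b (psi_at a r))"

(* psi_i: act at the node labelled pi_i, where pi = w(T) (1-based position i) *)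
definition psi :: "nat \<Rightarrow> nat tree \<Rightarrow> nat tree" where
  "psi i T = psi_at (inorder T ! (i - 1)) T"

inductive_set Orb :: "nat \<Rightarrow> nat tree \<Rightarrow> nat tree set" for n T where
  Orb_refl: "T \<in> Orb n T"
| Orb_step: "T' \<in> Orb n T \<Longrightarrow> i \<in> {1..n} \<Longrightarrow> psi i T' \<in> Orb n T"

definition alternating :: "nat list \<Rightarrow> bool" where
  "alternating xs \<longleftrightarrow>
     (\<forall>j. Suc j < length xs \<longrightarrow>
        (if even j then xs ! j > xs ! Suc j else xs ! j < xs ! Suc j))"

definition as_len :: "nat list \<Rightarrow> nat" where
  "as_len \<pi> = Max {length s | s. subseq s \<pi> \<and> s \<noteq> [] \<and> alternating s}"

end

theory Submission
  imports Defs
begin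

definition rel :: "bool \<Rightarrow> nat \<Rightarrow> nat \<Rightarrow> bool" where
  "rel d x y = (if d then y < x else x < y)"

fun altr :: "bool \<Rightarrow> nat list \<Rightarrow> bool" where
  "altr d [] = True"
| "altr d [x] = True"
| "altr d (x # y # zs) = (rel d x y \<and> altr (\<not> d) (y # zs))"

definition Lalt :: "bool \<Rightarrow> nat list \<Rightarrow> nat" where
  "Lalt d w = Max {length s | s. subseq s w \<and> altr d s}"

lemma altr_nth:
  "altr d s \<longleftrightarrow> (\<forall>j. Suc j < length s \<longrightarrow> rel (even j = d) (s ! j) (s ! Suc j))"
proof (induction d s rule: altr.induct)
  case (3 d x y zs)
  have "(\<forall>j. Suc j < length (x # y # zs) \<longrightarrow> rel (even j = d) ((x # y # zs) ! j) ((x # y # zs) ! Suc j))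
     \<longleftrightarrow> rel d x y \<and> (\<forall>j. Suc j < length (y # zs) \<longrightarrow> rel (even j = (\<not> d)) ((y # zs) ! j) ((y # zs) ! Suc j))"
    (is "?A \<longleftrightarrow> ?B")
  proof
    assume ?A
    have "rel d x y" using spec[OF \<open>?A\<close>, of 0] by simp
    moreover have "\<forall>j. Suc j < length (y # zs) \<longrightarrow> rel (even j = (\<not> d)) ((y # zs) ! j) ((y # zs) ! Suc j)"
    proof (intro allI impI)
      fix j assume "Suc j < length (y # zs)"
      then show "rel (even j = (\<not> d)) ((y # zs) ! j) ((y # zs) ! Suc j)"
        using spec[OF \<open>?A\<close>, of "Suc j"] by (cases "even j") auto
    qed
    ultimately show ?B by blast
  next
    assume B: ?B
    show ?A
    proof (intro allI impI)
      fix j assume j: "Suc j < length (x # y # zs)"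
      show "rel (even j = d) ((x # y # zs) ! j) ((x # y # zs) ! Suc j)"
      proof (cases j)
        case 0 then show ?thesis using B by simp
      next
        case (Suc k) then show ?thesis using B j by (cases "even k") auto
      qed
    qed
  qed
  then show ?case using 3 by simp
qed auto

lemma alternating_altr: "alternating s \<longleftrightarrow> altr True s"
  unfolding altr_nth alternating_def rel_def by auto

lemma altr_split:
  "altr d (xs @ y # ys) \<longleftrightarrow> altr d (xs @ [y]) \<and> altr (d = even (length xs)) (y # ys)"
proof (induction xs arbitrary: d)
  case Nil then show ?case by simp
next
  case (Cons x xs)
  show ?case
  proof (cases xs)
    case Nil then show ?thesis by simp
  next
    case (Cons x2 xs2)
    have "altr d ((x # xs) @ y # ys) = (rel d x x2 \<and> altr (\<not> d) (xs @ y # ys))"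
      using Cons by simp
    also have "\<dots> = (rel d x x2 \<and> altr (\<not> d) (xs @ [y]) \<and> altr ((\<not> d) = even (length xs)) (y # ys))"
      using Cons.IH by simp
    also have "\<dots> = (altr d ((x # xs) @ [y]) \<and> altr (d = even (length (x # xs))) (y # ys))"
      using Cons by auto
    finally show ?thesis .
  qed
qed

lemma altr_prefix: "altr d (xs @ ys) \<Longrightarrow> altr d xs"
proof (induction xs arbitrary: d)
  case (Cons x xs)
  then show ?case by (cases xs) auto
qed simp

lemma altr_suffix: "altr d (xs @ ys) \<Longrightarrow> altr (d = even (length xs)) ys"
proof (cases ys)
  case (Cons y ys')
  assume "altr d (xs @ ys)"
  then show ?thesis using altr_split[of d xs y ys'] Cons by blast
qed simp

lemma altr_snoc2:
  "altr d (xs @ [x, y]) \<longleftrightarrow> altr d (xs @ [x]) \<and> rel (d = even (length xs)) x y"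
proof -
  have "altr d (xs @ [x, y]) = (altr d (xs @ [x]) \<and> altr (d = even (length xs)) [x, y])"
    by (rule altr_split)
  moreover have "altr e [x, y] = rel e x y" for e by simp
  ultimately show ?thesis by metis
qed

lemma altr_tl: "altr d (x # xs) \<Longrightarrow> altr (\<not> d) xs"
  using altr_suffix[of d "[x]" xs] by simp

lemma fin_sub: "finite {length s | s. subseq s w \<and> altr d s}"
proof -
  have "{length s | s. subseq s w \<and> altr d s} \<subseteq> {..length w}"
  proof
    fix k assume "k \<in> {length s | s. subseq s w \<and> altr d s}"
    then obtain s where "k = length s" "subseq s w" by blast
    then show "k \<in> {..length w}" using list_emb_length by fastforce
  qed
  then show ?thesis using finite_subset by blast
qed

lemma Lalt_ge: "subseq s w \<Longrightarrow> altr d s \<Longrightarrow> length s \<le> Lalt d w"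
proof -
  assume "subseq s w" "altr d s"
  then have "length s \<in> {length s | s. subseq s w \<and> altr d s}" by blast
  then show ?thesis unfolding Lalt_def by (rule Max_ge[OF fin_sub])
qed

lemma Lalt_ex: "\<exists>s. subseq s w \<and> altr d s \<and> length s = Lalt d w"
proof -
  have "Lalt d w \<in> {length s | s. subseq s w \<and> altr d s}"
  proof -
    have "length ([]::nat list) \<in> {length s | s. subseq s w \<and> altr d s}"
      by (rule CollectI, rule exI[of _ "[]"]) simp
    then have "{length s | s. subseq s w \<and> altr d s} \<noteq> {}" by blast
    then show ?thesis unfolding Lalt_def by (rule Max_in[OF fin_sub])
  qed
  then obtain s where "Lalt d w = length s" "subseq s w" "altr d s" by (auto simp only: mem_Collect_eq)
  then show ?thesis by metis
qed

lemma Lalt_le: "Lalt d w \<le> length w"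
proof -
  obtain s where "subseq s w" "length s = Lalt d w" using Lalt_ex[of w d] by blast
  then show ?thesis using list_emb_length by fastforce
qed

lemma Lalt_Nil [simp]: "Lalt d [] = 0"
  using Lalt_le[of d "[]"] by simp

lemma Lalt_pos: "w \<noteq> [] \<Longrightarrow> 1 \<le> Lalt d w"
proof -
  assume "w \<noteq> []"
  then obtain x where "x \<in> set w" by (cases w) auto
  then have "subseq [x] w" by (simp add: subseq_singleton_left)
  from Lalt_ge[OF this, of d] show ?thesis by simp
qed

lemma Lalt_single [simp]: "Lalt d [a] = 1"
  using Lalt_pos[of "[a]" d] Lalt_le[of d "[a]"] by simp

lemma Lalt_other: "Lalt e w \<le> Lalt d w + 1"
proof -
  obtain s where s: "subseq s w" "altr e s" "length s = Lalt e w" using Lalt_ex by metis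
  show ?thesis
  proof (cases s)
    case Nil then show ?thesis using s by simp
  next
    case (Cons x s')
    show ?thesis
    proof (cases "e = d")
      case True then show ?thesis using s by simp
    next
      case False
      have "altr (\<not> e) s'" using altr_tl[of e x s'] s(2) Cons by simp
      then have "altr d s'" using False by (cases d) auto
      moreover have "subseq s' w" using s(1) Cons subseq_Cons'[of x s' w] by simp
      ultimately have "length s' \<le> Lalt d w" using Lalt_ge[of s' w d] by simp
      then show ?thesis using s Cons by simp
    qed
  qed
qed


lemma subseq_set: "subseq xs ys \<Longrightarrow> set xs \<subseteq> set ys"
proof
  fix x assume "subseq xs ys" "x \<in> set xs"
  then obtain y where "y \<in> set ys" "x = y" by (rule list_emb_set)
  then show "x \<in> set ys" by simp
qed

lemma altr_map:
  assumes "\<forall>x\<in>set s. \<forall>y\<in>set s. (x < y \<longleftrightarrow> (if e then f x < f y else f y < f x))"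
  shows "altr d (map f s) = altr (d = e) s"
  using assms
proof (induction d s rule: altr.induct)
  case (3 d x y zs)
  have xy: "x < y \<longleftrightarrow> (if e then f x < f y else f y < f x)"
    and yx: "y < x \<longleftrightarrow> (if e then f y < f x else f x < f y)" using "3.prems" by auto
  have r: "rel d (f x) (f y) = rel (d = e) x y"
    using xy yx by (cases d; cases e) (auto simp: rel_def)
  have "altr (\<not> d) (map f (y # zs)) = altr ((\<not> d) = e) (y # zs)"
    using "3.IH" "3.prems" by simp
  then show ?case using r by (cases d; cases e) auto
qed auto

lemma Lalt_map:
  assumes "\<forall>x\<in>set w. \<forall>y\<in>set w. (x < y \<longleftrightarrow> (if e then f x < f y else f y < f x))"
  shows "Lalt d (map f w) = Lalt (d = e) w"
proof -
  have "{length s | s. subseq s (map f w) \<and> altr d s} = {length s | s. subseq s w \<and> altr (d = e) s}"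
  proof (intro equalityI subsetI)
    fix k assume "k \<in> {length s | s. subseq s (map f w) \<and> altr d s}"
    then obtain s where s: "k = length s" "subseq s (map f w)" "altr d s"
      by (auto simp only: mem_Collect_eq)
    then obtain N where N: "s = nths (map f w) N" by (auto simp: subseq_conv_nths)
    define s' where "s' = nths w N"
    have ss: "s = map f s'" using N by (simp add: s'_def nths_map)
    have sub: "subseq s' w" unfolding s'_def subseq_conv_nths by blast
    have "set s' \<subseteq> set w" unfolding s'_def by (rule set_nths_subset)
    then have "altr d (map f s') = altr (d = e) s'"
      using assms by (intro altr_map) (meson subsetD)
    then have "altr (d = e) s'" using s ss by simp
    moreover have "k = length s'" using s ss by simp
    ultimately show "k \<in> {length s | s. subseq s w \<and> altr (d = e) s}" using sub by blast
  next
    fix k assume "k \<in> {length s | s. subseq s w \<and> altr (d = e) s}"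
    then obtain s where s: "k = length s" "subseq s w" "altr (d = e) s"
      by (auto simp only: mem_Collect_eq)
    have "set s \<subseteq> set w" using s(2) by (rule subseq_set)
    then have "altr d (map f s) = altr (d = e) s"
      using assms by (intro altr_map) (meson subsetD)
    then have "altr d (map f s)" using s by simp
    moreover have "subseq (map f s) (map f w)" using s(2) by (rule subseq_map)
    moreover have "k = length (map f s)" using s by simp
    ultimately show "k \<in> {length s | s. subseq s (map f w) \<and> altr d s}" by blast
  qed
  then show ?thesis unfolding Lalt_def by simp
qed

lemma glue:
  assumes "altr d s1" "even (length s1) \<noteq> d" "\<forall>x\<in>set s1. a < x"
    "altr True s3" "\<forall>x\<in>set s3. a < x"
  shows "altr d (s1 @ a # s3)"
proof -
  have 1: "altr d (s1 @ [a])"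
  proof (cases s1 rule: rev_cases)
    case Nil then show ?thesis by simp
  next
    case (snoc s1' x)
    have "rel (d = even (length s1')) x a"
      using assms(2,3) snoc by (auto simp: rel_def)
    then show ?thesis using assms(1) snoc altr_snoc2[of d s1' x a] by simp
  qed
  have 2: "altr (d = even (length s1)) (a # s3)"
  proof (cases s3)
    case Nil then show ?thesis by simp
  next
    case (Cons z s4)
    have "d = even (length s1) \<longleftrightarrow> False" using assms(2) by auto
    then show ?thesis using assms(4,5) Cons by (simp add: rel_def)
  qed
  show ?thesis using 1 2 altr_split by blast
qed

lemma L_min:
  assumes amin: "\<forall>x\<in>set u \<union> set v. a < x" and vne: "v \<noteq> []"
  shows "Lalt d (u @ a # v) = Lalt d u + Lalt True v + (if even (Lalt d u) \<noteq> d then 1 else 0)"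
proof -
  define p where "p = Lalt d u"
  define q where "q = Lalt True v"
  define B where "B = p + q + (if even p \<noteq> d then 1 else 0)"
  have q1: "1 \<le> q" unfolding q_def using vne by (rule Lalt_pos)
  have upper: "length s \<le> B" if s: "subseq s (u @ a # v)" "altr d s" for s
  proof -
    obtain s1 s2 where sp: "s = s1 @ s2" "subseq s1 u" "subseq s2 (a # v)"
      using s(1) by (rule subseq_appendE)
    define k where "k = length s1"
    have "altr d s1" using s(2) sp(1) altr_prefix by blast
    then have kp: "k \<le> p" unfolding k_def p_def using sp(2) Lalt_ge by blast
    define e where "e = (d = even k)"
    have as2: "altr e s2" using s(2) sp(1) altr_suffix unfolding e_def k_def by blast
    show ?thesis
    proof (cases s2)
      case Nil then show ?thesis using kp sp unfolding k_def B_def by simp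
    next
      case (Cons y s3)
      show ?thesis
      proof (cases "y = a")
        case False
        then have "subseq s2 v" using sp(3) Cons by simp
        then have l2: "length s2 \<le> Lalt e v" using as2 Lalt_ge by blast
        show ?thesis
        proof (cases e)
          case True
          then show ?thesis using l2 kp sp(1) unfolding B_def q_def k_def by simp
        next
          case False
          then have "length s2 \<le> q + 1" using l2 Lalt_other[of e v True] unfolding q_def by simp
          moreover have "even k \<noteq> d" using False unfolding e_def by auto
          ultimately show ?thesis using kp sp(1) k_def unfolding B_def
            by (cases "k = p") auto
        qed
      next
        case True
        then have s3v: "subseq s3 v" using sp(3) Cons by simp
        show ?thesis
        proof (cases s3)
          case Nil
          have ls: "length s = k + 1" using sp(1) Cons Nil unfolding k_def by simp
          show ?thesis
          proof (cases "k < p")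
            case True then show ?thesis using ls unfolding B_def by simp
          next
            case False
            then have kp': "k = p" using kp by simp
            show ?thesis
            proof (cases "even p \<noteq> d")
              case True then show ?thesis using ls kp' unfolding B_def by simp
            next
              case False
              then have ek: "even k = d" using kp' by simp
              show ?thesis
              proof (cases s1 rule: rev_cases)
                case Nil
                then have "k = 0" unfolding k_def by simp
                then show ?thesis using ls q1 kp' unfolding B_def by simp
              next
                case (snoc s1' x)
                have "x \<in> set u" using sp(2) snoc subseq_set by fastforce
                then have xa: "a < x" using amin by simp
                have "s = (s1' @ [x, a]) @ []" using sp(1) snoc Cons Nil True by simp
                then have "altr d (s1' @ [x, a])" using s(2) altr_prefix by metis
                then have "rel (d = even (length s1')) x a" using altr_snoc2 by blast
                then have "d = even (length s1')" using xa by (auto simp: rel_def split: if_splits)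
                moreover have "k = Suc (length s1')" unfolding k_def using snoc by simp
                ultimately show ?thesis using ek by simp
              qed
            qed
          qed
        next
          case (Cons z s4)
          have "z \<in> set v" using s3v Cons subseq_set by fastforce
          then have az: "a < z" using amin by simp
          have "altr e (a # z # s4)" using as2 \<open>s2 = y # s3\<close> True Cons by simp
          then have re: "rel e a z" and "altr (\<not> e) (z # s4)" by auto
          then have ne: "\<not> e" using az by (auto simp: rel_def split: if_splits)
          then have "altr True s3" using \<open>altr (\<not> e) (z # s4)\<close> Cons by simp
          then have "length s3 \<le> q" unfolding q_def using s3v Lalt_ge by blast
          moreover have "length s = k + 1 + length s3"
            using sp(1) \<open>s2 = y # s3\<close> unfolding k_def by simp
          moreover have "even k \<noteq> d" using ne unfolding e_def by auto
          ultimately show ?thesis using kp unfolding B_def by (cases "k = p") auto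
        qed
      qed
    qed
  qed
  have le: "Lalt d (u @ a # v) \<le> B"
  proof -
    obtain s where "subseq s (u @ a # v)" "altr d s" "length s = Lalt d (u @ a # v)"
      using Lalt_ex by metis
    then show ?thesis using upper by metis
  qed
  obtain s1 where s1: "subseq s1 u" "altr d s1" "length s1 = p" using Lalt_ex unfolding p_def by metis
  obtain s3 where s3: "subseq s3 v" "altr True s3" "length s3 = q" using Lalt_ex unfolding q_def by metis
  have s1a: "\<forall>x\<in>set s1. a < x" using subseq_set[OF s1(1)] amin by auto
  have s3a: "\<forall>x\<in>set s3. a < x" using subseq_set[OF s3(1)] amin by auto
  have sub3: "subseq (a # s3) (a # v)" using s3(1) by simp
  have ge: "B \<le> Lalt d (u @ a # v)"
  proof (cases "even p \<noteq> d")
    case True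
    have "altr d (s1 @ a # s3)" using glue[OF s1(2) _ s1a s3(2) s3a] True s1(3) by simp
    moreover have "subseq (s1 @ a # s3) (u @ a # v)" using s1(1) sub3 by (rule list_emb_append_mono)
    ultimately have "length (s1 @ a # s3) \<le> Lalt d (u @ a # v)" using Lalt_ge by blast
    then show ?thesis using True s1(3) s3(3) unfolding B_def by simp
  next
    case False
    show ?thesis
    proof (cases s1 rule: rev_cases)
      case Nil
      then have "p = 0" "d" using s1(3) False by auto
      have "subseq s3 (u @ a # v)" using s3(1) by (metis subseq_drop_many list_emb_Cons)
      then have "length s3 \<le> Lalt d (u @ a # v)" using s3(2) \<open>d\<close> Lalt_ge by simp
      then show ?thesis using \<open>p = 0\<close> False s3(3) unfolding B_def by simp
    next
      case (snoc s1' x)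
      have a1: "altr d s1'" using s1(2) snoc altr_prefix by blast
      have "Suc (length s1') = p" using s1(3) snoc by simp
      then have e1: "even (length s1') \<noteq> d" using False by auto
      have "\<forall>x\<in>set s1'. a < x" using s1a snoc by simp
      then have "altr d (s1' @ a # s3)" using glue[OF a1 e1 _ s3(2) s3a] by simp
      moreover have "subseq s1' (s1' @ [x])" by (rule prefix_imp_subseq) simp
      then have "subseq s1' u" using s1(1) snoc by (metis subseq_order.order_trans)
      then have "subseq (s1' @ a # s3) (u @ a # v)" using sub3 by (rule list_emb_append_mono)
      ultimately have "length (s1' @ a # s3) \<le> Lalt d (u @ a # v)" using Lalt_ge by blast
      then show ?thesis using False s1(3) s3(3) snoc unfolding B_def by simp
    qed
  qed
  show ?thesis using le ge unfolding B_def p_def q_def by simp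
qed


lemma L_max:
  assumes amax: "\<forall>x\<in>set u \<union> set v. x < a" and vne: "v \<noteq> []"
  shows "Lalt d (u @ a # v) = Lalt d u + Lalt False v + (if even (Lalt d u) = d then 1 else 0)"
proof -
  define f where "f = (\<lambda>x::nat. a - x)"
  have anti: "\<forall>x\<in>set w. \<forall>y\<in>set w. (x < y \<longleftrightarrow> (if False then f x < f y else f y < f x))"
    if "\<forall>x\<in>set w. x \<le> a" for w
    using that unfolding f_def by auto
  have wle: "\<forall>x\<in>set (u @ a # v). x \<le> a" using amax by (auto simp: less_imp_le)
  have ule: "\<forall>x\<in>set u. x \<le> a" using amax by (auto simp: less_imp_le)
  have vle: "\<forall>x\<in>set v. x \<le> a" using amax by (auto simp: less_imp_le)
  have "Lalt (\<not> d) (map f (u @ a # v)) = Lalt ((\<not> d) = False) (u @ a # v)"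
    by (rule Lalt_map[OF anti[OF wle]])
  then have 1: "Lalt d (u @ a # v) = Lalt (\<not> d) (map f u @ f a # map f v)" by simp
  have fa: "\<forall>x\<in>set (map f u) \<union> set (map f v). f a < x" using amax unfolding f_def by auto
  have 2: "Lalt (\<not> d) (map f u @ f a # map f v) =
     Lalt (\<not> d) (map f u) + Lalt True (map f v) + (if even (Lalt (\<not> d) (map f u)) \<noteq> (\<not> d) then 1 else 0)"
    by (rule L_min[OF fa]) (simp add: vne)
  have 3: "Lalt (\<not> d) (map f u) = Lalt d u"
    using Lalt_map[OF anti[OF ule], of "\<not> d"] by simp
  have 4: "Lalt True (map f v) = Lalt False v"
    using Lalt_map[OF anti[OF vle], of True] by simp
  show ?thesis using 1 2 3 4 by simp
qed

lemma as_len_Lalt: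
  assumes "w \<noteq> []"
  shows "as_len w = Lalt True w"
proof -
  define A where "A = {length s | s. subseq s w \<and> s \<noteq> [] \<and> alternating s}"
  have fA: "finite A"
  proof (rule finite_subset[OF _ fin_sub[of w True]])
    show "A \<subseteq> {length s | s. subseq s w \<and> altr True s}"
    proof
      fix k assume "k \<in> A"
      then obtain s where "k = length s" "subseq s w" "alternating s"
        unfolding A_def by (auto simp only: mem_Collect_eq)
      then show "k \<in> {length s | s. subseq s w \<and> altr True s}"
        using alternating_altr by blast
    qed
  qed
  obtain x where x: "x \<in> set w" using assms by (cases w) auto
  have "subseq [x] w" using x by (simp add: subseq_singleton_left)
  moreover have "alternating [x]" by (simp add: alternating_def)
  ultimately have "length [x] \<in> A" unfolding A_def by blast
  then have neA: "A \<noteq> {}" by blast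
  have l1: "as_len w \<le> Lalt True w"
  proof -
    have "as_len w \<in> A" unfolding as_len_def A_def[symmetric] using fA neA by (rule Max_in)
    then obtain s where "as_len w = length s" "subseq s w" "alternating s"
      unfolding A_def by (auto simp only: mem_Collect_eq)
    then show ?thesis using alternating_altr Lalt_ge by metis
  qed
  have l2: "Lalt True w \<le> as_len w"
  proof -
    obtain s where s: "subseq s w" "altr True s" "length s = Lalt True w" using Lalt_ex by metis
    show ?thesis
    proof (cases "s = []")
      case True then show ?thesis using s by simp
    next
      case False
      then have "length s \<in> A" unfolding A_def using s alternating_altr by blast
      then have "length s \<le> Max A" using fA by (rule Max_ge[rotated])
      then show ?thesis using s unfolding as_len_def A_def by simp
    qed
  qed
  show ?thesis using l1 l2 by simp
qed

definition ordiso :: "(nat \<Rightarrow> nat) \<Rightarrow> nat set \<Rightarrow> bool" where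
  "ordiso f S \<longleftrightarrow> (\<forall>x\<in>S. \<forall>y\<in>S. x < y \<longleftrightarrow> f x < f y)"

lemma ordiso_subset: "ordiso f S \<Longrightarrow> T \<subseteq> S \<Longrightarrow> ordiso f T"
  unfolding ordiso_def by blast

lemma ordiso_inj: "ordiso f S \<Longrightarrow> inj_on f S"
  unfolding ordiso_def inj_on_def by (metis linorder_neq_iff)

lemma ordiso_eq: "ordiso f S \<Longrightarrow> x \<in> S \<Longrightarrow> y \<in> S \<Longrightarrow> f x = f y \<longleftrightarrow> x = y"
  using ordiso_inj inj_on_eq_iff by metis

lemma ordiso_mem: "ordiso f S \<Longrightarrow> x \<in> S \<Longrightarrow> T \<subseteq> S \<Longrightarrow> f x \<in> f ` T \<longleftrightarrow> x \<in> T"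
  using ordiso_eq by blast

lemma ordiso_Min: "ordiso f S \<Longrightarrow> finite S \<Longrightarrow> S \<noteq> {} \<Longrightarrow> Min (f ` S) = f (Min S)"
proof -
  assume o: "ordiso f S" "finite S" "S \<noteq> {}"
  show ?thesis
  proof (rule Min_eqI)
    show "finite (f ` S)" using o by simp
    show "f (Min S) \<in> f ` S" using o by simp
    fix y assume "y \<in> f ` S"
    then obtain z where z: "z \<in> S" "y = f z" by blast
    then have "Min S \<le> z" using o by simp
    then show "f (Min S) \<le> y" using z o Min_in[of S] unfolding ordiso_def
      by (metis le_less)
  qed
qed

lemma ordiso_Max: "ordiso f S \<Longrightarrow> finite S \<Longrightarrow> S \<noteq> {} \<Longrightarrow> Max (f ` S) = f (Max S)"
proof -
  assume o: "ordiso f S" "finite S" "S \<noteq> {}"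
  show ?thesis
  proof (rule Max_eqI)
    show "finite (f ` S)" using o by simp
    show "f (Max S) \<in> f ` S" using o by simp
    fix y assume "y \<in> f ` S"
    then obtain z where z: "z \<in> S" "y = f z" by blast
    then have "z \<le> Max S" using o by simp
    then show "y \<le> f (Max S)" using z o Max_in[of S] unfolding ordiso_def
      by (metis le_less)
  qed
qed

definition rk :: "nat set \<Rightarrow> nat \<Rightarrow> nat" where
  "rk A x = card {y \<in> A. y < x}"

lemma ord_bij_rk: "ord_bij A B x = sorted_list_of_set B ! rk A x"
  unfolding ord_bij_def rk_def by simp

lemma rk_nth:
  assumes "finite B" "i < card B"
  shows "rk B (sorted_list_of_set B ! i) = i"
proof -
  define xs where "xs = sorted_list_of_set B"
  have sw: "sorted_wrt (<) xs" unfolding xs_def by (rule strict_sorted_list_of_set)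
  have sx: "set xs = B" unfolding xs_def using assms by simp
  have lx: "length xs = card B" unfolding xs_def by simp
  have dx: "distinct xs" unfolding xs_def by simp
  have "{y \<in> B. y < xs ! i} = (\<lambda>j. xs ! j) ` {..<i}"
  proof (intro equalityI subsetI)
    fix y assume "y \<in> {y \<in> B. y < xs ! i}"
    then have y: "y \<in> set xs" "y < xs ! i" using sx by auto
    then obtain j where j: "j < length xs" "y = xs ! j" by (auto simp: in_set_conv_nth)
    have "j < i"
    proof (rule ccontr)
      assume "\<not> j < i"
      then have "i = j \<or> i < j" by auto
      then show False
      proof
        assume "i = j" then show False using y j by simp
      next
        assume "i < j" then have "xs ! i < xs ! j" using sorted_wrt_nth_less[OF sw _ j(1)] by simp
        then show False using y j by simp
      qed
    qed
    then show "y \<in> (\<lambda>j. xs ! j) ` {..<i}" using j by auto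
  next
    fix y assume "y \<in> (\<lambda>j. xs ! j) ` {..<i}"
    then obtain j where j: "j < i" "y = xs ! j" by auto
    have "xs ! j < xs ! i" using sorted_wrt_nth_less[OF sw j(1)] assms lx by simp
    moreover have "xs ! j \<in> B" using j assms lx sx nth_mem[of j xs] by simp
    ultimately show "y \<in> {y \<in> B. y < xs ! i}" using j by simp
  qed
  moreover have "inj_on (\<lambda>j. xs ! j) {..<i}"
    using dx assms lx by (auto simp: inj_on_def nth_eq_iff_index_eq)
  ultimately show ?thesis unfolding rk_def xs_def[symmetric] by (simp add: card_image)
qed

lemma rk_less: "finite A \<Longrightarrow> x \<in> A \<Longrightarrow> rk A x < card A"
  unfolding rk_def by (rule psubset_card_mono) auto

lemma rk_mono: "finite A \<Longrightarrow> x \<in> A \<Longrightarrow> y \<in> A \<Longrightarrow> x < y \<Longrightarrow> rk A x < rk A y"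
  unfolding rk_def by (rule psubset_card_mono) auto

lemma sorted_rk: "finite A \<Longrightarrow> x \<in> A \<Longrightarrow> sorted_list_of_set A ! rk A x = x"
proof -
  assume a: "finite A" "x \<in> A"
  then obtain j where j: "j < length (sorted_list_of_set A)" "x = sorted_list_of_set A ! j"
    by (metis in_set_conv_nth set_sorted_list_of_set)
  then have "rk A x = j" using rk_nth[OF a(1)] by simp
  then show ?thesis using j by simp
qed

lemma ord_bij_in: "finite A \<Longrightarrow> finite B \<Longrightarrow> card A = card B \<Longrightarrow> x \<in> A \<Longrightarrow> ord_bij A B x \<in> B"
  unfolding ord_bij_rk using rk_less[of A x] nth_mem[of "rk A x" "sorted_list_of_set B"] by simp

lemma ord_bij_ordiso: "finite A \<Longrightarrow> finite B \<Longrightarrow> card A = card B \<Longrightarrow> ordiso (ord_bij A B) A"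
proof -
  assume a: "finite A" "finite B" "card A = card B"
  have sw: "sorted_wrt (<) (sorted_list_of_set B)" by (rule strict_sorted_list_of_set)
  have m: "ord_bij A B x < ord_bij A B y" if "x \<in> A" "y \<in> A" "x < y" for x y
    unfolding ord_bij_rk using sorted_wrt_nth_less[OF sw rk_mono[OF a(1) that]] rk_less[OF a(1) that(2)] a
    by simp
  show ?thesis unfolding ordiso_def
    by (metis m linorder_neq_iff order_less_asym)
qed

lemma ord_bij_image: "finite A \<Longrightarrow> finite B \<Longrightarrow> card A = card B \<Longrightarrow> ord_bij A B ` A = B"
proof -
  assume a: "finite A" "finite B" "card A = card B"
  have sub: "ord_bij A B ` A \<subseteq> B" using ord_bij_in[OF a] by blast
  have "card (ord_bij A B ` A) = card A"
    using ordiso_inj[OF ord_bij_ordiso[OF a]] by (rule card_image)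
  then show ?thesis using card_subset_eq[OF a(2) sub] a by simp
qed

lemma ord_bij_id: "finite A \<Longrightarrow> x \<in> A \<Longrightarrow> ord_bij A A x = x"
  unfolding ord_bij_rk by (rule sorted_rk)

lemma ord_bij_comp:
  "finite A \<Longrightarrow> finite B \<Longrightarrow> card A = card B \<Longrightarrow> x \<in> A \<Longrightarrow> ord_bij B C (ord_bij A B x) = ord_bij A C x"
proof -
  assume a: "finite A" "finite B" "card A = card B" "x \<in> A"
  have "rk A x < card B" using rk_less[OF a(1,4)] a(3) by simp
  then have "rk B (sorted_list_of_set B ! rk A x) = rk A x" using rk_nth[OF a(2)] by simp
  then show ?thesis unfolding ord_bij_rk by simp
qed

lemma sorted_image:
  assumes "finite B" "ordiso f B"
  shows "sorted_list_of_set (f ` B) = map f (sorted_list_of_set B)"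
proof -
  have sw: "sorted_wrt (<) (sorted_list_of_set B)" by (rule strict_sorted_list_of_set)
  have "sorted_wrt (<) (map f (sorted_list_of_set B))"
    unfolding sorted_wrt_map
    by (rule sorted_wrt_mono_rel[OF _ sw]) (use assms in \<open>auto simp: ordiso_def\<close>)
  moreover have "set (map f (sorted_list_of_set B)) = f ` B" using assms by simp
  moreover have "length (map f (sorted_list_of_set B)) = card (f ` B)"
    using assms card_image[OF ordiso_inj[OF assms(2)]] by simp
  ultimately show ?thesis using sorted_list_of_set_unique[of "f ` B" "map f (sorted_list_of_set B)"] assms
    by (metis finite_imageI)
qed

lemma ord_bij_map:
  assumes "finite A" "finite B" "card A = card B" "ordiso f (A \<union> B)" "x \<in> A"
  shows "ord_bij (f ` A) (f ` B) (f x) = f (ord_bij A B x)"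
proof -
  have "{y \<in> f ` A. y < f x} = f ` {y \<in> A. y < x}"
    using assms(4,5) unfolding ordiso_def by auto
  moreover have "inj_on f {y \<in> A. y < x}"
    using ordiso_inj[OF assms(4)] by (rule inj_on_subset) auto
  ultimately have r: "rk (f ` A) (f x) = rk A x" unfolding rk_def by (simp add: card_image)
  have s: "sorted_list_of_set (f ` B) = map f (sorted_list_of_set B)"
    using assms(2) ordiso_subset[OF assms(4)] by (intro sorted_image) auto
  have "rk A x < card B" using rk_less[OF assms(1,5)] assms(3) by simp
  then show ?thesis unfolding ord_bij_rk r s by simp
qed

abbreviation hr :: "nat tree \<Rightarrow> bool" where
  "hr t \<equiv> hr_cond t \<and> distinct (inorder t)"

lemma set_inorder_tree: "set (inorder t) = set_tree t"
  by simp

lemma hr_cond_map: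
  assumes "ordiso f (set_tree t)"
  shows "hr_cond (map_tree f t) = hr_cond t"
  using assms
proof (induction t)
  case Leaf then show ?case by simp
next
  case (Node l a r)
  define S where "S = set_tree (Node l a r)"
  have o: "ordiso f S" using Node.prems unfolding S_def .
  have fS: "finite S" "S \<noteq> {}" unfolding S_def by auto
  have ih: "hr_cond (map_tree f l) = hr_cond l" "hr_cond (map_tree f r) = hr_cond r"
    using Node.IH Node.prems ordiso_subset by auto
  have sm: "set_tree (map_tree f (Node l a r)) = f ` S" unfolding S_def by (simp add: tree.set_map image_Un)
  have aS: "a \<in> S" unfolding S_def by simp
  have mn: "Min (f ` S) = f (Min S)" and mx: "Max (f ` S) = f (Max S)"
    using ordiso_Min[OF o fS] ordiso_Max[OF o fS] by auto
  have MinS: "Min S \<in> S" and MaxS: "Max S \<in> S" using fS by auto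
  have e1: "(f a = f (Min S)) = (a = Min S)" using ordiso_eq[OF o aS MinS] .
  have e2: "(f a = f (Max S)) = (a = Max S)" using ordiso_eq[OF o aS MaxS] .
  have rS: "set_tree r \<subseteq> S" unfolding S_def by auto
  have e3: "(f (Max S) \<in> f ` set_tree r) = (Max S \<in> set_tree r)" using ordiso_mem[OF o MaxS rS] .
  have e4: "(f (Min S) \<in> f ` set_tree r) = (Min S \<in> set_tree r)" using ordiso_mem[OF o MinS rS] .
  have "hr_cond (map_tree f (Node l a r)) =
     (hr_cond (map_tree f l) \<and> hr_cond (map_tree f r) \<and>
      ((f a = Min (f ` S) \<or> f a = Max (f ` S)) \<and>
        ((map_tree f l \<noteq> Leaf \<or> map_tree f r \<noteq> Leaf) \<longrightarrow>
           map_tree f r \<noteq> Leaf \<and>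
           (if f a = Min (f ` S) then Max (f ` S) \<in> set_tree (map_tree f r) else Min (f ` S) \<in> set_tree (map_tree f r)))))"
    using sm by (simp add: Let_def)
  also have "\<dots> = (hr_cond l \<and> hr_cond r \<and>
      ((a = Min S \<or> a = Max S) \<and>
        ((l \<noteq> Leaf \<or> r \<noteq> Leaf) \<longrightarrow>
           r \<noteq> Leaf \<and>
           (if a = Min S then Max S \<in> set_tree r else Min S \<in> set_tree r))))"
    using ih mn mx e1 e2 e3 e4 by (simp add: tree.set_map)
  also have "\<dots> = hr_cond (Node l a r)" unfolding S_def by (simp add: Let_def)
  finally show ?case .
qed

lemma psi_notin: "b \<notin> set_tree t \<Longrightarrow> psi_at b t = t"
  by (induction t) auto

lemma hr_node:
  assumes "hr (Node l a r)" "\<not> (l = Leaf \<and> r = Leaf)"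
  defines "S \<equiv> set_tree (Node l a r)" and "R \<equiv> insert a (set_tree r)"
  shows "r \<noteq> Leaf" "Min R = Min S" "Max R = Max S" "Min S \<noteq> Max S" "a = Min S \<or> a = Max S"
    "a = Min S \<Longrightarrow> Max S \<in> set_tree r" "a \<noteq> Min S \<Longrightarrow> Min S \<in> set_tree r"
    "a \<notin> set_tree r" "a \<notin> set_tree l" "set_tree l \<inter> set_tree r = {}"
proof -
  have h0: "hr_cond l \<and> hr_cond r \<and> ((a = Min S \<or> a = Max S) \<and> ((l \<noteq> Leaf \<or> r \<noteq> Leaf) \<longrightarrow>
     r \<noteq> Leaf \<and> (if a = Min S then Max S \<in> set_tree r else Min S \<in> set_tree r)))"
  proof -
    have "hr_cond (Node l a r)" using assms(1) by simp
    then show ?thesis unfolding S_def hr_cond.simps(2) Let_def .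
  qed
  have h: "(a = Min S \<or> a = Max S) \<and> r \<noteq> Leaf \<and>
           (if a = Min S then Max S \<in> set_tree r else Min S \<in> set_tree r)"
    using h0 assms(2) by blast
  then show rl: "r \<noteq> Leaf" and am: "a = Min S \<or> a = Max S" by auto
  show i1: "a = Min S \<Longrightarrow> Max S \<in> set_tree r" "a \<noteq> Min S \<Longrightarrow> Min S \<in> set_tree r" using h by auto
  show dr: "a \<notin> set_tree r" "a \<notin> set_tree l" "set_tree l \<inter> set_tree r = {}"
    using assms(1) by auto
  have fS: "finite S" "S \<noteq> {}" unfolding S_def by auto
  have RS: "R \<subseteq> S" "finite R" "R \<noteq> {}" unfolding R_def S_def by auto
  have MinR: "Min S \<in> R" "Max S \<in> R"
  proof -
    show "Min S \<in> R" using i1(2) unfolding R_def by (cases "a = Min S") auto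
    show "Max S \<in> R" using i1(1) am unfolding R_def by (cases "a = Min S") auto
  qed
  show "Min R = Min S"
    using MinR RS fS by (meson Min_antimono Min_le antisym)
  show "Max R = Max S"
    using MinR RS fS by (meson Max_mono Max_ge antisym)
  show "Min S \<noteq> Max S"
    using am i1 dr(1) by metis
qed

lemma psi_map:
  assumes "ordiso f (set_tree t)" "distinct (inorder t)" "c \<in> set_tree t"
  shows "psi_at (f c) (map_tree f t) = map_tree f (psi_at c t)"
  using assms
proof (induction t)
  case Leaf then show ?case by simp
next
  case (Node l b r)
  define S where "S = set_tree (Node l b r)"
  have o: "ordiso f S" using Node.prems unfolding S_def by simp
  have dl: "distinct (inorder l)" and dr: "distinct (inorder r)"
    and disj: "set_tree l \<inter> set_tree r = {}" "b \<notin> set_tree l" "b \<notin> set_tree r"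
    using Node.prems(2) by auto
  have cS: "c \<in> S" "b \<in> S" using Node.prems(3) unfolding S_def by auto
  show ?case
  proof (cases "c = b")
    case False
    then have fne: "f c \<noteq> f b" using ordiso_eq[OF o cS] by simp
    have cases: "c \<in> set_tree l \<or> c \<in> set_tree r" using Node.prems(3) False by simp
    show ?thesis
    proof (cases "c \<in> set_tree l")
      case True
      then have cr: "c \<notin> set_tree r" using disj by auto
      then have "f c \<notin> f ` set_tree r" using ordiso_mem[OF o cS(1)] unfolding S_def by auto
      then have "psi_at (f c) (map_tree f r) = map_tree f r" by (simp add: psi_notin tree.set_map)
      moreover have "psi_at (f c) (map_tree f l) = map_tree f (psi_at c l)"
        using Node.IH(1)[OF ordiso_subset[OF Node.prems(1)] dl True] by auto
      ultimately show ?thesis using False fne cr by (simp add: psi_notin)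
    next
      case False
      then have cr: "c \<in> set_tree r" using cases by simp
      then have "f c \<notin> f ` set_tree l" using ordiso_mem[OF o cS(1)] \<open>c \<notin> set_tree l\<close>
        unfolding S_def by auto
      then have "psi_at (f c) (map_tree f l) = map_tree f l" by (simp add: psi_notin tree.set_map)
      moreover have "psi_at (f c) (map_tree f r) = map_tree f (psi_at c r)"
        using Node.IH(2)[OF ordiso_subset[OF Node.prems(1)] dr cr] by auto
      ultimately show ?thesis using \<open>c \<noteq> b\<close> fne False by (simp add: psi_notin)
    qed
  next
    case True
    show ?thesis
    proof (cases "l = Leaf \<and> r = Leaf")
      case True then show ?thesis using \<open>c = b\<close> by simp
    next
      case inner: False
      define R where "R = insert b (set_tree r)"
      define new where "new = (if b = Min S then Max R else Min R)"
      define g where "g = ord_bij (set_tree r) (R - {new})"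
      have fS: "finite S" "S \<noteq> {}" unfolding S_def by auto
      have RS: "R \<subseteq> S" "finite R" "R \<noteq> {}" unfolding R_def S_def by auto
      have oR: "ordiso f R" using ordiso_subset[OF o RS(1)] .
      have newR: "new \<in> R" unfolding new_def using RS by auto
      have lhs: "psi_at c (Node l b r) = Node l new (map_tree g r)"
        using True inner unfolding new_def g_def R_def S_def by (simp add: Let_def)
      have fS': "set_tree (map_tree f (Node l b r)) = f ` S" unfolding S_def by (simp add: tree.set_map image_Un)
      have fR': "insert (f b) (set_tree (map_tree f r)) = f ` R" unfolding R_def by (simp add: tree.set_map)
      have mS: "Min (f ` S) = f (Min S)" using ordiso_Min[OF o fS] .
      have mR: "Min (f ` R) = f (Min R)" "Max (f ` R) = f (Max R)"
        using ordiso_Min[OF oR RS(2,3)] ordiso_Max[OF oR RS(2,3)] by auto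
      have eb: "(f b = f (Min S)) = (b = Min S)" using ordiso_eq[OF o cS(2)] fS by simp
      have new': "(if f b = Min (f ` S) then Max (f ` R) else Min (f ` R)) = f new"
        unfolding new_def mS mR eb by simp
      have finl: "\<not> (map_tree f l = Leaf \<and> map_tree f r = Leaf)" using inner by simp
      have rhs: "psi_at (f c) (map_tree f (Node l b r)) =
         Node (map_tree f l) (f new) (map_tree (ord_bij (f ` set_tree r) (f ` R - {f new})) (map_tree f r))"
        using True inner fS' fR' new' by (auto simp: Let_def tree.set_map)
      have img: "f ` R - {f new} = f ` (R - {new})"
        using ordiso_inj[OF oR] newR by (auto simp: inj_on_def)
      have cardr: "card (set_tree r) = card (R - {new})"
        using newR disj(3) RS unfolding R_def by (simp add: card_insert_if)
      have oU: "ordiso f (set_tree r \<union> (R - {new}))" by (rule ordiso_subset[OF oR]) (auto simp: R_def)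
      have "map_tree (ord_bij (f ` set_tree r) (f ` R - {f new})) (map_tree f r) = map_tree f (map_tree g r)"
        unfolding tree.map_comp img g_def
      proof (rule tree.map_cong0)
        fix x assume "x \<in> set_tree r"
        then show "(ord_bij (f ` set_tree r) (f ` (R - {new})) \<circ> f) x = (f \<circ> ord_bij (set_tree r) (R - {new})) x"
          using ord_bij_map[OF _ _ cardr oU] RS by simp
      qed
      then show ?thesis using lhs rhs by simp
    qed
  qed
qed

definition Fn :: "nat tree \<Rightarrow> nat \<Rightarrow> nat tree \<Rightarrow> nat \<Rightarrow> nat tree \<Rightarrow> nat tree" where
  "Fn r a l' a' r' = Node l' a' (map_tree (ord_bij (set_tree r) (insert a (set_tree r) - {a'})) r')"

fun orbs :: "nat tree \<Rightarrow> nat tree set" where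
  "orbs Leaf = {Leaf}"
| "orbs (Node l a r) = (if l = Leaf \<and> r = Leaf then {Node l a r} else
     (\<lambda>(l', a', r'). Fn r a l' a' r') ` (orbs l \<times> {Min (insert a (set_tree r)), Max (insert a (set_tree r))} \<times> orbs r))"

lemma img3_iff: "T' \<in> (\<lambda>(x, y, z). f x y z) ` (A \<times> B \<times> C) \<longleftrightarrow> (\<exists>x y z. T' = f x y z \<and> x \<in> A \<and> y \<in> B \<and> z \<in> C)"
  by force

lemma orbs_inner_iff:
  assumes "\<not> (l = Leaf \<and> r = Leaf)"
  shows "T' \<in> orbs (Node l a r) \<longleftrightarrow> (\<exists>l' a' r'. T' = Fn r a l' a' r' \<and> l' \<in> orbs l \<and>
      a' \<in> {Min (insert a (set_tree r)), Max (insert a (set_tree r))} \<and> r' \<in> orbs r)"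
  unfolding orbs.simps(2) if_not_P[OF assms] img3_iff ..

lemma orbs_finite: "finite (orbs T)"
  by (induction T) auto

lemma g_facts:
  assumes "hr (Node l a r)" "\<not> (l = Leaf \<and> r = Leaf)"
    "a' \<in> {Min (insert a (set_tree r)), Max (insert a (set_tree r))}"
  shows "ordiso (ord_bij (set_tree r) (insert a (set_tree r) - {a'})) (set_tree r)"
    "ord_bij (set_tree r) (insert a (set_tree r) - {a'}) ` set_tree r = insert a (set_tree r) - {a'}"
    "a' \<in> insert a (set_tree r)"
    "card (set_tree r) = card (insert a (set_tree r) - {a'})"
proof -
  define R where "R = insert a (set_tree r)"
  have fR: "finite R" "R \<noteq> {}" unfolding R_def by auto
  show aR: "a' \<in> insert a (set_tree r)" using assms(3) Min_in[OF fR] Max_in[OF fR] unfolding R_def[symmetric] by auto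
  have "a \<notin> set_tree r" using assms(1) by auto
  then show c: "card (set_tree r) = card (insert a (set_tree r) - {a'})"
    using aR by (simp add: card_insert_if)
  show "ordiso (ord_bij (set_tree r) (insert a (set_tree r) - {a'})) (set_tree r)"
    using c by (intro ord_bij_ordiso) auto
  show "ord_bij (set_tree r) (insert a (set_tree r) - {a'}) ` set_tree r = insert a (set_tree r) - {a'}"
    using c by (intro ord_bij_image) auto
qed

lemma hr_cond_Node_iff:
  "hr_cond (Node l a r) \<longleftrightarrow> hr_cond l \<and> hr_cond r \<and>
     ((a = Min (set_tree (Node l a r)) \<or> a = Max (set_tree (Node l a r))) \<and>
        ((l \<noteq> Leaf \<or> r \<noteq> Leaf) \<longrightarrow>
           r \<noteq> Leaf \<and>
           (if a = Min (set_tree (Node l a r)) then Max (set_tree (Node l a r)) \<in> set_tree r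
            else Min (set_tree (Node l a r)) \<in> set_tree r)))"
  unfolding hr_cond.simps(2) Let_def ..

lemma orbs_props: "hr T \<Longrightarrow> T' \<in> orbs T \<Longrightarrow> hr T' \<and> set_tree T' = set_tree T"
proof (induction T arbitrary: T')
  case Leaf then show ?case by simp
next
  case (Node l a r)
  show ?case
  proof (cases "l = Leaf \<and> r = Leaf")
    case True then show ?thesis using Node.prems by auto
  next
    case inner: False
    obtain l' a' r' where T': "T' = Fn r a l' a' r'" "l' \<in> orbs l"
      "a' \<in> {Min (insert a (set_tree r)), Max (insert a (set_tree r))}" "r' \<in> orbs r"
      using Node.prems(2) orbs_inner_iff[OF inner] by blast
    define S where "S = set_tree (Node l a r)"
    define R where "R = insert a (set_tree r)"
    define g where "g = ord_bij (set_tree r) (R - {a'})"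
    have hl: "hr l" and hrr: "hr r" using Node.prems(1) by auto
    have ihl: "hr l' \<and> set_tree l' = set_tree l" using Node.IH(1)[OF hl T'(2)] .
    have ihr: "hr r' \<and> set_tree r' = set_tree r" using Node.IH(2)[OF hrr T'(4)] .
    note hn = hr_node[OF Node.prems(1) inner, folded S_def R_def]
    note gf = g_facts[OF Node.prems(1) inner T'(3), folded R_def, folded g_def]
    have og: "ordiso g (set_tree r')" using gf(1) ihr by simp
    have T'': "T' = Node l' a' (map_tree g r')" using T'(1) unfolding Fn_def g_def R_def by simp
    have setg: "set_tree (map_tree g r') = R - {a'}" using gf(2) ihr by (simp add: tree.set_map)
    have aR: "a' \<in> R" using gf(3) .
    have setT': "set_tree T' = S"
      using T'' setg ihl aR unfolding S_def R_def by auto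
    have dl: "set_tree l \<inter> R = {}" using hn(9,10) unfolding R_def by auto
    have dist: "distinct (inorder T')"
    proof -
      have "distinct (map g (inorder r'))"
        using ihr ordiso_inj[OF og] by (simp add: distinct_map)
      moreover have "set (map g (inorder r')) = R - {a'}" using setg by (simp add: tree.set_map)
      ultimately show ?thesis using T'' ihl dl aR setg by (auto simp: inorder_map)
    qed
    have a'S: "a' = Min S \<or> a' = Max S" using T'(3) hn(2,3) unfolding R_def[symmetric] by auto
    have rne: "map_tree g r' \<noteq> Leaf" using hn(1) ihr by (cases r'; cases r) auto
    have MS: "Max S \<in> R" "Min S \<in> R" using hn(2,3) Max_in Min_in by (metis R_def finite_insert finite_set_tree insert_not_empty)+
    have hc: "hr_cond T'"
      unfolding T'' hr_cond_Node_iff setT'[unfolded T'']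
      using ihl ihr og hr_cond_map[OF og] a'S rne setg MS hn(4)
      by auto
    show ?thesis using hc dist setT' unfolding S_def by simp
  qed
qed

lemma orbs_self: "hr T \<Longrightarrow> T \<in> orbs T"
proof (induction T)
  case Leaf then show ?case by simp
next
  case (Node l a r)
  show ?case
  proof (cases "l = Leaf \<and> r = Leaf")
    case True then show ?thesis by simp
  next
    case inner: False
    define R where "R = insert a (set_tree r)"
    note hn = hr_node[OF Node.prems inner, folded R_def]
    have a: "a \<in> {Min R, Max R}" using hn(2,3,5) by auto
    have "R - {a} = set_tree r" unfolding R_def using hn(8) by auto
    then have "map_tree (ord_bij (set_tree r) (R - {a})) r = r"
      by (simp add: ord_bij_id tree.map_ident_strong)
    then have "Node l a r = Fn r a l a r" unfolding Fn_def R_def by simp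
    moreover have "l \<in> orbs l" "r \<in> orbs r" using Node.IH Node.prems by auto
    ultimately show ?thesis using orbs_inner_iff[OF inner] a unfolding R_def by blast
  qed
qed


lemma orbs_closed: "hr T \<Longrightarrow> T' \<in> orbs T \<Longrightarrow> psi_at b T' \<in> orbs T"
proof (induction T arbitrary: T' b)
  case Leaf then show ?case by simp
next
  case (Node l a r)
  show ?case
  proof (cases "l = Leaf \<and> r = Leaf")
    case True then show ?thesis using Node.prems by (auto simp: psi_notin)
  next
    case inner: False
    obtain l' a' r' where T': "T' = Fn r a l' a' r'" "l' \<in> orbs l"
      "a' \<in> {Min (insert a (set_tree r)), Max (insert a (set_tree r))}" "r' \<in> orbs r"
      using Node.prems(2) orbs_inner_iff[OF inner] by blast
    define S where "S = set_tree (Node l a r)"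
    define R where "R = insert a (set_tree r)"
    define g where "g = ord_bij (set_tree r) (R - {a'})"
    have hl: "hr l" and hrr: "hr r" using Node.prems(1) by auto
    have ihl: "hr l' \<and> set_tree l' = set_tree l" using orbs_props[OF hl T'(2)] .
    have ihr: "hr r' \<and> set_tree r' = set_tree r" using orbs_props[OF hrr T'(4)] .
    note hn = hr_node[OF Node.prems(1) inner, folded S_def R_def]
    note gf = g_facts[OF Node.prems(1) inner T'(3), folded R_def, folded g_def]
    have og: "ordiso g (set_tree r')" using gf(1) ihr by simp
    have T'': "T' = Node l' a' (map_tree g r')" using T'(1) unfolding Fn_def g_def R_def by simp
    have setg: "set_tree (map_tree g r') = R - {a'}" using gf(2) ihr by (simp add: tree.set_map)
    have aR: "a' \<in> R" using gf(3) .
    have pT': "hr T' \<and> set_tree T' = S" using orbs_props[OF Node.prems] unfolding S_def by simp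
    have dl: "set_tree l \<inter> R = {}" using hn(9,10) unfolding R_def by auto
    have rne: "map_tree g r' \<noteq> Leaf" using hn(1) ihr by (cases r'; cases r) auto
    have a'M: "a' \<in> {Min R, Max R}" using T'(3) unfolding R_def .
    have memb: "Fn r a l'' a'' r'' \<in> orbs (Node l a r)" if "l'' \<in> orbs l" "a'' \<in> {Min R, Max R}" "r'' \<in> orbs r"
      for l'' a'' r''
      using that orbs_inner_iff[OF inner] unfolding R_def by blast
    show ?thesis
    proof (cases "b = a'")
      case True
      define new where "new = (if a' = Min S then Max R else Min R)"
      have SR: "set_tree T' = S" "insert a' (set_tree (map_tree g r')) = R"
        using pT' setg aR by auto
      have ps: "psi_at b T' = Node l' new (map_tree (ord_bij (R - {a'}) (R - {new})) (map_tree g r'))"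
        using True rne SR setg unfolding T'' new_def by (simp add: Let_def)
      have newM: "new \<in> {Min R, Max R}" unfolding new_def by simp
      have cA: "card (set_tree r) = card (R - {a'})" using gf(4) .
      have "map_tree (ord_bij (R - {a'}) (R - {new})) (map_tree g r') = map_tree (ord_bij (set_tree r) (R - {new})) r'"
        unfolding tree.map_comp
      proof (rule tree.map_cong0)
        fix x assume "x \<in> set_tree r'"
        then have "x \<in> set_tree r" using ihr by simp
        then show "(ord_bij (R - {a'}) (R - {new}) \<circ> g) x = ord_bij (set_tree r) (R - {new}) x"
          unfolding g_def using ord_bij_comp[OF _ _ cA] unfolding R_def by simp
      qed
      then have "psi_at b T' = Fn r a l' new r'" using ps unfolding Fn_def R_def by simp
      then show ?thesis using memb[OF T'(2) newM T'(4)] by simp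
    next
      case False
      show ?thesis
      proof (cases "b \<in> set_tree l")
        case True
        then have "b \<notin> set_tree (map_tree g r')" using setg dl by auto
        then have "psi_at b T' = Node (psi_at b l') a' (map_tree g r')"
          using False unfolding T'' by (simp add: psi_notin)
        also have "\<dots> = Fn r a (psi_at b l') a' r'" unfolding Fn_def g_def R_def by simp
        finally show ?thesis using memb[OF Node.IH(1)[OF hl T'(2)] a'M T'(4)] by simp
      next
        case bl: False
        show ?thesis
        proof (cases "b \<in> set_tree (map_tree g r')")
          case True
          then obtain c where c: "c \<in> set_tree r'" "b = g c" by (auto simp: tree.set_map)
          have "psi_at b (map_tree g r') = map_tree g (psi_at c r')"
            unfolding c(2) using og ihr c(1) by (intro psi_map) auto
          moreover have "psi_at b l' = l'" using bl ihl by (simp add: psi_notin)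
          ultimately have "psi_at b T' = Node l' a' (map_tree g (psi_at c r'))"
            using False unfolding T'' by simp
          also have "\<dots> = Fn r a l' a' (psi_at c r')" unfolding Fn_def g_def R_def by simp
          finally show ?thesis using memb[OF T'(2) a'M Node.IH(2)[OF hrr T'(4)]] by simp
        next
          case False
          then have "b \<notin> set_tree T'" using bl ihl \<open>b \<noteq> a'\<close> unfolding T'' by auto
          then show ?thesis using Node.prems(2) by (simp add: psi_notin)
        qed
      qed
    qed
  qed
qed

inductive_set orb2 :: "nat tree \<Rightarrow> nat tree set" for T where
  orb2_refl: "T \<in> orb2 T"
| orb2_step: "T' \<in> orb2 T \<Longrightarrow> psi_at b T' \<in> orb2 T"

lemma orb2_trans: "T2 \<in> orb2 T1 \<Longrightarrow> T1 \<in> orb2 T0 \<Longrightarrow> T2 \<in> orb2 T0"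
  by (induction rule: orb2.induct) (auto intro: orb2_step)

lemma orb2_sub: assumes "hr T" "T' \<in> orb2 T" shows "T' \<in> orbs T"
  using assms(2) by (induction rule: orb2.induct) (auto intro: orbs_self[OF assms(1)] orbs_closed[OF assms(1)])

lemma lift_left:
  assumes "hr l" "a \<notin> set_tree l" "set_tree l \<inter> set_tree r = {}" "l1 \<in> orb2 l"
  shows "Node l1 a r \<in> orb2 (Node l a r)"
  using assms(4)
proof (induction rule: orb2.induct)
  case orb2_refl then show ?case by (rule orb2.orb2_refl)
next
  case (orb2_step l1 b)
  have sl: "set_tree l1 = set_tree l" using orbs_props[OF assms(1) orb2_sub[OF assms(1) orb2_step.hyps(1)]] by simp
  show ?case
  proof (cases "b \<in> set_tree l1")
    case True
    then have "b \<noteq> a" "b \<notin> set_tree r" using sl assms(2,3) by auto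
    then have "psi_at b (Node l1 a r) = Node (psi_at b l1) a r" by (simp add: psi_notin)
    then show ?thesis using orb2.orb2_step[OF orb2_step.IH, of b] by simp
  next
    case False
    then show ?thesis using orb2_step.IH by (simp add: psi_notin)
  qed
qed

lemma lift_right:
  assumes "hr r" "a \<notin> set_tree r" "set_tree l \<inter> set_tree r = {}" "r1 \<in> orb2 r"
  shows "Node l a r1 \<in> orb2 (Node l a r)"
  using assms(4)
proof (induction rule: orb2.induct)
  case orb2_refl then show ?case by (rule orb2.orb2_refl)
next
  case (orb2_step r1 b)
  have sr: "set_tree r1 = set_tree r" using orbs_props[OF assms(1) orb2_sub[OF assms(1) orb2_step.hyps(1)]] by simp
  show ?case
  proof (cases "b \<in> set_tree r1")
    case True
    then have "b \<noteq> a" "b \<notin> set_tree l" using sr assms(2,3) by auto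
    then have "psi_at b (Node l a r1) = Node l a (psi_at b r1)" by (simp add: psi_notin)
    then show ?thesis using orb2.orb2_step[OF orb2_step.IH, of b] by simp
  next
    case False
    then show ?thesis using orb2_step.IH by (simp add: psi_notin)
  qed
qed

lemma orbs_sub_orb2: "hr T \<Longrightarrow> T' \<in> orbs T \<Longrightarrow> T' \<in> orb2 T"
proof (induction T arbitrary: T')
  case Leaf then show ?case by (simp add: orb2.orb2_refl)
next
  case (Node l a r)
  show ?case
  proof (cases "l = Leaf \<and> r = Leaf")
    case True then show ?thesis using Node.prems by (auto intro: orb2.orb2_refl)
  next
    case inner: False
    obtain l' a' r' where T': "T' = Fn r a l' a' r'" "l' \<in> orbs l"
      "a' \<in> {Min (insert a (set_tree r)), Max (insert a (set_tree r))}" "r' \<in> orbs r"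
      using Node.prems(2) orbs_inner_iff[OF inner] by blast
    define S where "S = set_tree (Node l a r)"
    define R where "R = insert a (set_tree r)"
    have hl: "hr l" and hrr: "hr r" using Node.prems(1) by auto
    have ihl: "hr l' \<and> set_tree l' = set_tree l" using orbs_props[OF hl T'(2)] .
    have ihr: "hr r' \<and> set_tree r' = set_tree r" using orbs_props[OF hrr T'(4)] .
    note hn = hr_node[OF Node.prems(1) inner, folded S_def R_def]
    have o1: "l' \<in> orb2 l" using Node.IH(1)[OF hl T'(2)] .
    have o2: "r' \<in> orb2 r" using Node.IH(2)[OF hrr T'(4)] .
    have s1: "Node l' a r \<in> orb2 (Node l a r)" using lift_left[OF hl hn(9) hn(10) o1] .
    have s2: "Node l' a r' \<in> orb2 (Node l' a r)"
      using lift_right[OF hrr hn(8) _ o2] hn(10) ihl by simp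
    have s3: "Node l' a r' \<in> orb2 (Node l a r)" using orb2_trans[OF s2 s1] .
    show ?thesis
    proof (cases "a' = a")
      case True
      have "R - {a} = set_tree r" unfolding R_def using hn(8) by auto
      then have "map_tree (ord_bij (set_tree r) (R - {a})) r' = r'"
        using ihr by (intro tree.map_ident_strong) (auto simp: ord_bij_id)
      then have "T' = Node l' a r'" using T'(1) True unfolding Fn_def R_def by simp
      then show ?thesis using s3 by simp
    next
      case False
      define new where "new = (if a = Min S then Max R else Min R)"
      have newa: "new = a'"
        using T'(3) False hn(2,3,5) unfolding new_def R_def[symmetric] by auto
      have SS: "set_tree (Node l' a r') = S" "insert a (set_tree r') = R"
        using ihl ihr unfolding S_def R_def by auto
      have rne: "r' \<noteq> Leaf" using ihr hn(1) by (cases r; cases r') auto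
      have "psi_at a (Node l' a r') = Node l' new (map_tree (ord_bij (set_tree r') (R - {new})) r')"
        using rne SS unfolding new_def by (simp add: Let_def)
      also have "\<dots> = T'" using T'(1) newa ihr unfolding Fn_def R_def by simp
      finally show ?thesis using orb2.orb2_step[OF s3, of a] by simp
    qed
  qed
qed

lemma Orb_eq:
  assumes "hr T" "length (inorder T) = n"
  shows "Orb n T = orbs T"
proof
  show "Orb n T \<subseteq> orbs T"
  proof
    fix T' assume "T' \<in> Orb n T"
    then show "T' \<in> orbs T"
    proof (induction rule: Orb.induct)
      case Orb_refl then show ?case using orbs_self[OF assms(1)] .
    next
      case (Orb_step T' i)
      then show ?case unfolding psi_def using orbs_closed[OF assms(1)] by blast
    qed
  qed
next
  show "orbs T \<subseteq> Orb n T"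
  proof
    fix T' assume "T' \<in> orbs T"
    then have "T' \<in> orb2 T" using orbs_sub_orb2[OF assms(1)] by blast
    then show "T' \<in> Orb n T"
    proof (induction rule: orb2.induct)
      case orb2_refl then show ?case by (rule Orb.Orb_refl)
    next
      case (orb2_step T' b)
      have p: "hr T' \<and> set_tree T' = set_tree T"
        using orbs_props[OF assms(1) orb2_sub[OF assms(1) orb2_step.hyps(1)]] .
      have len: "length (inorder T') = n"
        using p assms distinct_card[of "inorder T'"] distinct_card[of "inorder T"] by simp
      show ?case
      proof (cases "b \<in> set_tree T'")
        case True
        then obtain j where j: "j < length (inorder T')" "inorder T' ! j = b"
          by (metis in_set_conv_nth set_inorder)
        have "psi (Suc j) T' = psi_at b T'" unfolding psi_def using j by simp
        moreover have "Suc j \<in> {1..n}" using j len by simp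
        ultimately show ?thesis using Orb.Orb_step[OF orb2_step.IH, of "Suc j"] by simp
      next
        case False
        then show ?thesis using orb2_step.IH by (simp add: psi_notin)
      qed
    qed
  qed
qed

definition Gp :: "nat tree \<Rightarrow> int poly" where
  "Gp t = monom 1 (leaf_count t) * [:1, 1:] ^ (size t - leaf_count t)"

lemma leaf_le: "leaf_count t \<le> size t"
  by (induction t) auto

lemma monom_two: "monom (1::int) 0 + monom 1 1 = [:1, 1:]"
  by (simp add: monom_0 monom_Suc one_pCons)

lemma monom_add1: "monom (1::int) (m + n) = monom 1 m * monom 1 n"
  by (simp add: mult_monom)

lemma pair01: "Q = (\<not> P) \<Longrightarrow> monom (1::int) (p + (if P then 1 else 0)) + monom 1 (p + (if Q then 1 else 0)) = monom 1 p * [:1, 1:]"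
proof -
  assume Q: "Q = (\<not> P)"
  have "monom (1::int) p * [:1,1:] = monom 1 p * monom 1 0 + monom 1 p * monom 1 1"
    by (simp only: monom_two[symmetric] distrib_left)
  also have "\<dots> = monom 1 p + monom 1 (p+1)" by (simp only: monom_add1[symmetric] add_0_right)
  finally show ?thesis unfolding Q by (cases P) (simp_all only: if_True if_False not_True_eq_False not_False_eq_True add_0_right add_0_left add.commute)
qed

lemma Gp_inner:
  assumes "\<not> (l = Leaf \<and> r = Leaf)"
  shows "Gp (Node l a r) = Gp l * [:1, 1:] * Gp r"
proof -
  have h2: "size (Node l a r) - leaf_count (Node l a r) = (size l - leaf_count l) + (size r - leaf_count r) + 1"
    using assms leaf_le[of l] leaf_le[of r] by auto
  have h1: "leaf_count (Node l a r) = leaf_count l + leaf_count r" using assms by auto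
  show ?thesis unfolding Gp_def unfolding h2 unfolding h1 monom_add1 power_add power_one_right
    by (simp only: ac_simps)
qed

lemma Fn_inj:
  assumes "hr (Node l a r)" "\<not> (l = Leaf \<and> r = Leaf)"
  shows "inj_on (\<lambda>(l', a', r'). Fn r a l' a' r')
     (orbs l \<times> {Min (insert a (set_tree r)), Max (insert a (set_tree r))} \<times> orbs r)"
proof (rule inj_onI)
  fix x y
  assume xm: "x \<in> orbs l \<times> {Min (insert a (set_tree r)), Max (insert a (set_tree r))} \<times> orbs r"
    and ym: "y \<in> orbs l \<times> {Min (insert a (set_tree r)), Max (insert a (set_tree r))} \<times> orbs r"
    and exy: "(\<lambda>(l', a', r'). Fn r a l' a' r') x = (\<lambda>(l', a', r'). Fn r a l' a' r') y"
  obtain l1 a1 r1 where x: "x = (l1, a1, r1)" by (cases x) auto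
  obtain l2 a2 r2 where y: "y = (l2, a2, r2)" by (cases y) auto
  have m: "l1 \<in> orbs l" "a1 \<in> {Min (insert a (set_tree r)), Max (insert a (set_tree r))}" "r1 \<in> orbs r"
    "l2 \<in> orbs l" "a2 \<in> {Min (insert a (set_tree r)), Max (insert a (set_tree r))}" "r2 \<in> orbs r"
    using xm ym x y by auto
  have e: "Fn r a l1 a1 r1 = Fn r a l2 a2 r2" using exy x y by simp
  have hrr: "hr r" using assms(1) by auto
  have s: "set_tree r1 = set_tree r" "set_tree r2 = set_tree r"
    using orbs_props[OF hrr m(3)] orbs_props[OF hrr m(6)] by auto
  from e have 1: "l1 = l2" "a1 = a2" unfolding Fn_def by auto
  define g where "g = ord_bij (set_tree r) (insert a (set_tree r) - {a1})"
  have og: "ordiso g (set_tree r)" using g_facts(1)[OF assms m(2)] unfolding g_def .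
  from e 1 have "map_tree g r1 = map_tree g r2" unfolding Fn_def g_def by simp
  then have "r1 = r2"
    by (rule tree.inj_map_strong[rotated]) (use og s ordiso_eq in metis)
  then show "x = y" using 1 x y by simp
qed

lemma sum_orbs: "hr T \<Longrightarrow> (\<Sum>T'\<in>orbs T. monom (1::int) (Lalt d (inorder T'))) = Gp T"
proof (induction T arbitrary: d)
  case Leaf then show ?case by (simp add: Gp_def)
next
  case (Node l a r)
  show ?case
  proof (cases "l = Leaf \<and> r = Leaf")
    case True then show ?thesis by (simp add: Gp_def)
  next
    case inner: False
    define S where "S = set_tree (Node l a r)"
    define R where "R = insert a (set_tree r)"
    define M where "M = {Min R, Max R}"
    define F where "F = (\<lambda>(l', a', r'). Fn r a l' a' r')"
    define f where "f = (\<lambda>T'. monom (1::int) (Lalt d (inorder T')))"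
    have hl: "hr l" and hrr: "hr r" using Node.prems(1) by auto
    note hn = hr_node[OF Node.prems(1) inner, folded S_def R_def]
    have oT: "orbs (Node l a r) = F ` (orbs l \<times> M \<times> orbs r)"
      unfolding F_def M_def R_def by (simp only: orbs.simps if_not_P[OF inner])
    have inj: "inj_on F (orbs l \<times> M \<times> orbs r)"
      using Fn_inj[OF Node.prems(1) inner] unfolding F_def M_def R_def .
    have MR: "Min R \<noteq> Max R" using hn(2,3,4) by simp
    have val: "f (Fn r a l' a' r') = monom 1 (Lalt d (inorder l') +
         (if a' = Min R then (if even (Lalt d (inorder l')) \<noteq> d then 1 else 0)
          else (if even (Lalt d (inorder l')) = d then 1 else 0))) *
         monom 1 (Lalt (a' = Min R) (inorder r'))"
      if m: "l' \<in> orbs l" "a' \<in> M" "r' \<in> orbs r" for l' a' r'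
    proof -
      define g where "g = ord_bij (set_tree r) (R - {a'})"
      have a'M: "a' \<in> {Min (insert a (set_tree r)), Max (insert a (set_tree r))}"
        using m(2) unfolding M_def R_def .
      note gf = g_facts[OF Node.prems(1) inner a'M, folded R_def, folded g_def]
      have ihl: "hr l' \<and> set_tree l' = set_tree l" using orbs_props[OF hl m(1)] .
      have ihr: "hr r' \<and> set_tree r' = set_tree r" using orbs_props[OF hrr m(3)] .
      have og: "ordiso g (set_tree r')" using gf(1) ihr by simp
      have io: "inorder (Fn r a l' a' r') = inorder l' @ a' # map g (inorder r')"
        unfolding Fn_def g_def R_def by (simp add: inorder_map)
      have setm: "set (map g (inorder r')) = R - {a'}" using gf(2) ihr by simp
      have dl: "set_tree l \<inter> R = {}" using hn(9,10) unfolding R_def by auto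
      have others: "set (inorder l') \<union> set (map g (inorder r')) \<subseteq> S - {a'}"
        using setm ihl dl gf(3) unfolding S_def R_def by auto
      have fS: "finite S" "S \<noteq> {}" unfolding S_def by auto
      have rne: "map g (inorder r') \<noteq> []" using hn(1) ihr by (cases r'; cases r) auto
      have Lr: "Lalt e (map g (inorder r')) = Lalt e (inorder r')" for e
      proof -
        have "\<forall>x\<in>set (inorder r'). \<forall>y\<in>set (inorder r'). (x < y \<longleftrightarrow> (if True then g x < g y else g y < g x))"
          using og unfolding ordiso_def by simp
        from Lalt_map[OF this, of e] show ?thesis by simp
      qed
      show ?thesis
      proof (cases "a' = Min R")
        case True
        then have "a' = Min S" using hn(2) by simp
        then have "\<forall>x\<in>set (inorder l') \<union> set (map g (inorder r')). a' < x"
          using others fS Min_le[OF fS(1)] by (metis DiffD1 DiffD2 insertCI le_neq_implies_less subsetD)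
        from L_min[OF this rne, of d] show ?thesis unfolding f_def io Lr
          using True by (simp add: monom_add1 algebra_simps)
      next
        case False
        then have "a' = Max R" using m(2) unfolding M_def by simp
        then have "a' = Max S" using hn(3) by simp
        then have "\<forall>x\<in>set (inorder l') \<union> set (map g (inorder r')). x < a'"
          using others fS Max_ge[OF fS(1)] by (metis DiffD1 DiffD2 insertCI le_neq_implies_less subsetD)
        from L_max[OF this rne, of d] show ?thesis unfolding f_def io Lr
          using False by (simp add: monom_add1 algebra_simps)
      qed
    qed
    have "(\<Sum>T'\<in>orbs (Node l a r). f T') = (\<Sum>x\<in>orbs l \<times> M \<times> orbs r. f (F x))"
      unfolding oT using inj by (simp add: sum.reindex)
    also have "\<dots> = (\<Sum>(l', a', r')\<in>orbs l \<times> M \<times> orbs r. f (Fn r a l' a' r'))"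
    proof -
      have Fx: "f (F x) = (case x of (l', a', r') \<Rightarrow> f (Fn r a l' a' r'))" for x
        unfolding F_def by (cases x) auto
      show ?thesis by (simp only: Fx)
    qed
    also have "\<dots> = (\<Sum>l'\<in>orbs l. \<Sum>(a', r')\<in>M \<times> orbs r. f (Fn r a l' a' r'))"
      by (rule sum.cartesian_product[symmetric])
    also have "\<dots> = (\<Sum>l'\<in>orbs l. \<Sum>a'\<in>M. \<Sum>r'\<in>orbs r. f (Fn r a l' a' r'))"
      by (rule sum.cong[OF refl]) (rule sum.cartesian_product[symmetric])
    also have "\<dots> = (\<Sum>l'\<in>orbs l. monom 1 (Lalt d (inorder l')) * [:1, 1:] * Gp r)"
    proof (rule sum.cong[OF refl])
      fix l' assume l': "l' \<in> orbs l"
      define p where "p = Lalt d (inorder l')"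
      have "(\<Sum>a'\<in>M. \<Sum>r'\<in>orbs r. f (Fn r a l' a' r')) =
            (\<Sum>r'\<in>orbs r. f (Fn r a l' (Min R) r')) + (\<Sum>r'\<in>orbs r. f (Fn r a l' (Max R) r'))"
        unfolding M_def using MR by simp
      also have "(\<Sum>r'\<in>orbs r. f (Fn r a l' (Min R) r')) =
          (\<Sum>r'\<in>orbs r. monom 1 (p + (if even p \<noteq> d then 1 else 0)) * monom 1 (Lalt True (inorder r')))"
        using val[OF l'] unfolding M_def p_def by (intro sum.cong) auto
      also have "\<dots> = monom 1 (p + (if even p \<noteq> d then 1 else 0)) * Gp r"
        unfolding sum_distrib_left[symmetric] using Node.IH(2)[OF hrr] by simp
      also have "(\<Sum>r'\<in>orbs r. f (Fn r a l' (Max R) r')) =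
          (\<Sum>r'\<in>orbs r. monom 1 (p + (if even p = d then 1 else 0)) * monom 1 (Lalt False (inorder r')))"
        using val[OF l'] MR unfolding M_def p_def by (intro sum.cong) auto
      also have "\<dots> = monom 1 (p + (if even p = d then 1 else 0)) * Gp r"
        unfolding sum_distrib_left[symmetric] using Node.IH(2)[OF hrr] by simp
      also have "monom 1 (p + (if even p \<noteq> d then 1 else 0)) * Gp r + monom 1 (p + (if even p = d then 1 else 0)) * Gp r
          = (monom 1 (p + (if even p \<noteq> d then 1 else 0)) + monom 1 (p + (if even p = d then 1 else 0))) * Gp r"
        by (simp only: distrib_right)
      also have "\<dots> = monom 1 p * [:1, 1:] * Gp r"
      proof -
        have pq: "(even p = d) = (\<not> (even p \<noteq> d))" by simp
        show ?thesis unfolding pair01[OF pq] ..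
      qed
      finally show "(\<Sum>a'\<in>M. \<Sum>r'\<in>orbs r. f (Fn r a l' a' r')) = monom 1 (Lalt d (inorder l')) * [:1, 1:] * Gp r"
        unfolding p_def .
    qed
    also have "\<dots> = Gp l * [:1, 1:] * Gp r"
      unfolding sum_distrib_right[symmetric] using Node.IH(1)[OF hl] by simp
    also have "\<dots> = Gp (Node l a r)" using Gp_inner[OF inner] by simp
    finally show ?thesis unfolding f_def .
  qed
qed

lemma hr_exists: "distinct xs \<Longrightarrow> \<exists>T. hr_cond T \<and> inorder T = xs"
proof (induction "length xs" arbitrary: xs rule: less_induct)
  case less
  show ?case
  proof (cases "xs = []")
    case True then show ?thesis by (intro exI[of _ Leaf]) simp
  next
    case False
    define S where "S = set xs"
    have fS: "finite S" "S \<noteq> {}" unfolding S_def using False by auto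
    obtain i where i: "i < length xs" "xs ! i = Min S"
      using Min_in[OF fS] unfolding S_def by (metis in_set_conv_nth)
    obtain j where j: "j < length xs" "xs ! j = Max S"
      using Max_in[OF fS] unfolding S_def by (metis in_set_conv_nth)
    define p where "p = min i j"
    have pl: "p < length xs" unfolding p_def using i j by simp
    have "length (take p xs) < length xs" "distinct (take p xs)" using pl less.prems by auto
    then obtain l where l: "hr_cond l" "inorder l = take p xs"
      using less.hyps[of "take p xs"] by metis
    have "length (drop (Suc p) xs) < length xs" "distinct (drop (Suc p) xs)" using pl less.prems by auto
    then obtain r where r: "hr_cond r" "inorder r = drop (Suc p) xs"
      using less.hyps[of "drop (Suc p) xs"] by metis
    define a where "a = xs ! p"
    have xs: "xs = take p xs @ a # drop (Suc p) xs" unfolding a_def using pl by (simp add: id_take_nth_drop)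
    have io: "inorder (Node l a r) = xs" using l r xs by simp
    have ST: "set_tree (Node l a r) = S" using io unfolding S_def by (metis set_inorder)
    have am: "a = Min S \<or> a = Max S" unfolding a_def p_def using i j by (cases "i \<le> j") (auto simp: min_def)
    have inner: "r \<noteq> Leaf \<and> (if a = Min S then Max S \<in> set_tree r else Min S \<in> set_tree r)"
      if ne: "l \<noteq> Leaf \<or> r \<noteq> Leaf"
    proof -
      have "length xs \<ge> 2" using ne io by (cases l; cases r) auto
      then have "card S \<ge> 2" unfolding S_def using less.prems distinct_card by metis
      then have "Min S \<noteq> Max S" using fS
        by (metis Max_ge Min_le card_le_Suc0_iff_eq dual_order.antisym not_less_eq_eq numeral_2_eq_2)
      then have ij: "i \<noteq> j" using i j by auto
      have inr: "xs ! k \<in> set_tree r" if "p < k" "k < length xs" for k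
      proof -
        have "xs ! k = drop (Suc p) xs ! (k - Suc p)" using that by simp
        moreover have "k - Suc p < length (drop (Suc p) xs)" using that by simp
        ultimately show ?thesis using r(2) by (metis nth_mem set_inorder)
      qed
      show ?thesis
      proof (cases "i < j")
        case True
        then have "p = i" "a = Min S" unfolding p_def a_def using i by auto
        then show ?thesis using inr[OF _ j(1)] True j(2) by (auto simp del: set_inorder)
      next
        case False
        then have "j < i" using ij by simp
        then have "p = j" "a = Max S" "a \<noteq> Min S" unfolding p_def a_def using i j \<open>Min S \<noteq> Max S\<close> by auto
        then show ?thesis using inr[OF _ i(1)] \<open>j < i\<close> i(2) by (auto simp del: set_inorder)
      qed
    qed
    have "hr_cond (Node l a r)"
      unfolding hr_cond_Node_iff ST using l(1) r(1) am inner by blast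
    then show ?thesis using io by blast
  qed
qed

lemma root_pos:
  assumes "hr (Node l a r)"
  defines "xs \<equiv> inorder (Node l a r)"
  shows "length (inorder l) = (LEAST k. xs ! k \<in> {Min (set xs), Max (set xs)})"
proof (rule Least_equality[symmetric])
  have S: "set xs = set_tree (Node l a r)" unfolding xs_def by simp
  have "a = Min (set_tree (Node l a r)) \<or> a = Max (set_tree (Node l a r))"
    using assms(1) unfolding hr_cond_Node_iff by blast
  moreover have "xs ! length (inorder l) = a" unfolding xs_def by (simp add: nth_append)
  ultimately show "xs ! length (inorder l) \<in> {Min (set xs), Max (set xs)}" unfolding S by auto
  fix k assume k: "xs ! k \<in> {Min (set xs), Max (set xs)}"
  show "length (inorder l) \<le> k"
  proof (rule ccontr)
    assume "\<not> length (inorder l) \<le> k"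
    then have kl: "k < length (inorder l)" by simp
    have "xs ! k = inorder l ! k" unfolding xs_def using kl by (simp add: nth_append)
    moreover have "inorder l ! k \<in> set (inorder l)" using kl by (rule nth_mem)
    ultimately have "xs ! k \<in> set_tree l" by simp
    then have nl: "l \<noteq> Leaf" by auto
    note hn = hr_node[OF assms(1)] 
    have ne: "\<not> (l = Leaf \<and> r = Leaf)" using nl by simp
    have m1: "Min (set_tree (Node l a r)) \<in> insert a (set_tree r)"
      using hn(7)[OF ne] by (metis insertI1 insertI2)
    have m2: "Max (set_tree (Node l a r)) \<in> insert a (set_tree r)"
      using hn(5)[OF ne] hn(6)[OF ne] by (metis insertI1 insertI2)
    have "{Min (set xs), Max (set xs)} \<subseteq> insert a (set_tree r)"
      unfolding S using m1 m2 by (simp only: insert_subset empty_subsetI simp_thms)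
    then show False using \<open>xs ! k \<in> set_tree l\<close> k hn(9,10) nl by auto
  qed
qed

lemma hr_unique: "hr T1 \<Longrightarrow> hr T2 \<Longrightarrow> inorder T1 = inorder T2 \<Longrightarrow> T1 = T2"
proof (induction T1 arbitrary: T2)
  case Leaf then show ?case by simp
next
  case (Node l1 a1 r1)
  obtain l2 a2 r2 where T2: "T2 = Node l2 a2 r2" using Node.prems(3) by (cases T2) auto
  define xs where "xs = inorder (Node l1 a1 r1)"
  have r1: "length (inorder l1) = (LEAST k. inorder (Node l1 a1 r1) ! k \<in> {Min (set (inorder (Node l1 a1 r1))), Max (set (inorder (Node l1 a1 r1)))})"
    by (rule root_pos[OF Node.prems(1)])
  have r2: "length (inorder l2) = (LEAST k. inorder (Node l2 a2 r2) ! k \<in> {Min (set (inorder (Node l2 a2 r2))), Max (set (inorder (Node l2 a2 r2)))})"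
    by (rule root_pos) (use Node.prems(2) T2 in simp)
  have eq: "inorder (Node l1 a1 r1) = inorder (Node l2 a2 r2)" using Node.prems(3) T2 by simp
  have k: "length (inorder l1) = length (inorder l2)"
    using r1 r2 unfolding eq by (rule trans[OF _ sym])
  have e: "inorder l1 @ a1 # inorder r1 = inorder l2 @ a2 # inorder r2"
    using Node.prems(3) T2 by simp
  then have "inorder l1 = inorder l2" "a1 # inorder r1 = a2 # inorder r2" using k by auto
  then have "l1 = l2" "a1 = a2" "r1 = r2"
    using Node.IH Node.prems T2 by auto
  then show ?case using T2 by simp
qed

lemma T_of_prop:
  assumes "is_perm_word n \<pi>"
  shows "hr_tree n (T_of n \<pi>) \<and> inorder (T_of n \<pi>) = \<pi>"
proof -
  obtain T where T: "hr_cond T" "inorder T = \<pi>" using hr_exists assms unfolding is_perm_word_def by blast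
  have hT: "hr_tree n T" unfolding hr_tree_def using T assms unfolding is_perm_word_def
    by (metis set_inorder)
  have "T_of n \<pi> = T" unfolding T_of_def
  proof (rule the_equality)
    show "hr_tree n T \<and> inorder T = \<pi>" using hT T by simp
    fix T' assume "hr_tree n T' \<and> inorder T' = \<pi>"
    then show "T' = T" using hr_unique[of T' T] hT T unfolding hr_tree_def by simp
  qed
  then show ?thesis using hT T by simp
qed

theorem mainTheorem3:
  fixes n :: nat and \<pi> :: "nat list"
  assumes "n \<ge> 1" and "is_perm_word n \<pi>"
  shows "(\<Sum>T\<in>Orb n (T_of n \<pi>). monom (1::int) (as_len (inorder T)))
       = monom 1 (leaf_count (T_of n \<pi>)) * [:1, 1:] ^ (n - leaf_count (T_of n \<pi>))"
proof -
  define T0 where "T0 = T_of n \<pi>"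
  have tp: "hr_tree n T0 \<and> inorder T0 = \<pi>" using T_of_prop[OF assms(2)] unfolding T0_def .
  have h0: "hr T0" using tp unfolding hr_tree_def by blast
  have dp: "distinct \<pi>" "set \<pi> = {1..n}" using assms(2) unfolding is_perm_word_def by auto
  have "length \<pi> = n" using distinct_card[OF dp(1)] dp(2) by simp
  then have len: "length (inorder T0) = n" using tp by simp
  have sz: "size T0 = n" using len by simp
  have "(\<Sum>T\<in>Orb n T0. monom (1::int) (as_len (inorder T))) = (\<Sum>T\<in>orbs T0. monom (1::int) (as_len (inorder T)))"
    using Orb_eq[OF h0 len] by simp
  also have "\<dots> = (\<Sum>T\<in>orbs T0. monom (1::int) (Lalt True (inorder T)))"
  proof (rule sum.cong[OF refl])
    fix T assume "T \<in> orbs T0"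
    then have "set_tree T = set_tree T0" using orbs_props[OF h0] by blast
    moreover have "T0 \<noteq> Leaf" using sz assms(1) by auto
    ultimately have "inorder T \<noteq> []" by auto
    then show "monom 1 (as_len (inorder T)) = monom 1 (Lalt True (inorder T))" by (simp add: as_len_Lalt)
  qed
  also have "\<dots> = Gp T0" using sum_orbs[OF h0] .
  finally show ?thesis unfolding T0_def[symmetric] Gp_def sz .
qed

end
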